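(* Let $K$ be a field, $S=K[x_1,\dots,x_n]$, $A\subseteq\{1,\dots,n\}$ and $f=\prod_{j\in A}x_j$. In any Stanley decomposition of $S_f$, the number of Stanley spaces of maximal dimension (among the spaces of that decomposition) is equal to $2^{|A|}$.
   Context: $S_f=K[x_1,\dots,x_n,x_j^{-1}:j\in A]$ with $K$-basis the monomials $x_1^{a_1}\cdots x_n^{a_n}$, $a_j\in\mathbb Z$ for $j\in A$, $a_j\in\mathbb N$ otherwise. A Stanley space of $S_f$ is $uK[Z]$, the $K$-span of the monomials $uw$ ($w$ a monomial in the elements of $Z$), where $u$ is a monomial, $Z\subseteq\{x_1,\dots,x_n\}\cup\{x_j^{-1}:j\in A\}$ with $\{x_j,x_j^{-1}\}\not\subseteq Z$ for all $j\in A$, and $uK[Z]$ is a free $K[Z]$-module; its dimension is $|Z|$. A Stanley decomposition of $S_f$ is an expression of $S_f$ as a finite direct sum (of $K$-vector spaces) of Stanley spaces. *)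

theory Defs
  imports "HOL-Library.Poly_Mapping"
begin

text \<open>Variables x_1..x_n are indexed by 1..n. A Laurent monomial
  x_1^{a_1}...x_n^{a_n} is represented by its exponent vector a :: nat => int
  (zero outside 1..n). Elements of S_f are finitely supported K-linear
  combinations of the monomials of S_f, i.e. elements of
  (nat => int) =>0 'k whose support consists of monomials of S_f.\<close>

definition monomials_Sf :: "nat \<Rightarrow> nat set \<Rightarrow> (nat \<Rightarrow> int) set" where
  "monomials_Sf n A = {a. (\<forall>j. j \<notin> {1..n} \<longrightarrow> a j = 0) \<and> (\<forall>j. j \<notin> A \<longrightarrow> a j \<ge> 0)}"

definition Sf :: "nat \<Rightarrow> nat set \<Rightarrow> ((nat \<Rightarrow> int) \<Rightarrow>\<^sub>0 'k::field) set" where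
  "Sf n A = {p. Poly_Mapping.keys p \<subseteq> monomials_Sf n A}"

text \<open>The generator set Z: (j, True) stands for x_j, (j, False) for x_j^{-1}.\<close>

definition valid_Z :: "nat \<Rightarrow> nat set \<Rightarrow> (nat \<times> bool) set \<Rightarrow> bool" where
  "valid_Z n A Z \<longleftrightarrow> Z \<subseteq> {(j, True) | j. j \<in> {1..n}} \<union> {(j, False) | j. j \<in> A}
     \<and> (\<forall>j. \<not> ((j, True) \<in> Z \<and> (j, False) \<in> Z))"

definition monomials_in :: "(nat \<times> bool) set \<Rightarrow> (nat \<Rightarrow> int) set" where
  "monomials_in Z = {w. \<exists>e :: nat \<times> bool \<Rightarrow> nat. (\<forall>z. z \<notin> Z \<longrightarrow> e z = 0) \<and>
      (\<forall>j. w j = int (e (j, True)) - int (e (j, False)))}"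

text \<open>The K-span uK[Z] of the monomials uw (product of monomials = sum of exponents).\<close>

definition stanley_space :: "(nat \<Rightarrow> int) \<Rightarrow> (nat \<times> bool) set \<Rightarrow> ((nat \<Rightarrow> int) \<Rightarrow>\<^sub>0 'k::field) set" where
  "stanley_space u Z = {p. Poly_Mapping.keys p \<subseteq> (\<lambda>w j. u j + w j) ` monomials_in Z}"

text \<open>(u, Z) describes a Stanley space of S_f: u monomial of S_f, Z valid, and
  uK[Z] free over K[Z] (for a monomial space: w \<mapsto> uw injective).\<close>

definition is_stanley_space :: "nat \<Rightarrow> nat set \<Rightarrow> (nat \<Rightarrow> int) \<times> (nat \<times> bool) set \<Rightarrow> bool" where
  "is_stanley_space n A uZ \<longleftrightarrow> fst uZ \<in> monomials_Sf n A \<and> valid_Z n A (snd uZ)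
     \<and> inj_on (\<lambda>w j. fst uZ j + w j) (monomials_in (snd uZ))"

definition stanley_dim :: "(nat \<Rightarrow> int) \<times> (nat \<times> bool) set \<Rightarrow> nat" where
  "stanley_dim uZ = card (snd uZ)"

text \<open>A Stanley decomposition: a finite family (list) of Stanley spaces such that S_f
  is their direct sum as K-vector spaces (unique decomposition of every element).\<close>

definition stanley_decomposition ::
  "'k::field itself \<Rightarrow> nat \<Rightarrow> nat set \<Rightarrow> ((nat \<Rightarrow> int) \<times> (nat \<times> bool) set) list \<Rightarrow> bool" where
  "stanley_decomposition _ n A D \<longleftrightarrow>
     (\<forall>i < length D. is_stanley_space n A (D ! i)) \<and>
     (\<forall>i < length D. (stanley_space (fst (D ! i)) (snd (D ! i)) :: ((nat \<Rightarrow> int) \<Rightarrow>\<^sub>0 'k) set) \<subseteq> Sf n A) \<and>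
     (\<forall>p \<in> (Sf n A :: ((nat \<Rightarrow> int) \<Rightarrow>\<^sub>0 'k) set).
        \<exists>!ps. length ps = length D \<and>
              (\<forall>i < length D. ps ! i \<in> stanley_space (fst (D ! i)) (snd (D ! i))) \<and>
              p = sum_list ps)"

end

theory Submission
  imports Defs
begin

definition cone :: "(nat \<Rightarrow> int) \<Rightarrow> (nat \<times> bool) set \<Rightarrow> (nat \<Rightarrow> int) set" where
  "cone u Z = (\<lambda>w j. u j + w j) ` monomials_in Z"

lemma cone_char:
  assumes nb: "\<forall>j. \<not> ((j, True) \<in> Z \<and> (j, False) \<in> Z)"
  shows "b \<in> cone u Z \<longleftrightarrow> (\<forall>j. ((j,True)\<in>Z \<longrightarrow> u j \<le> b j) \<and> ((j,False)\<in>Z \<longrightarrow> b j \<le> u j)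
            \<and> ((j,True)\<notin>Z \<and> (j,False)\<notin>Z \<longrightarrow> b j = u j))"
proof
  assume "b \<in> cone u Z"
  then obtain w where b: "b = (\<lambda>j. u j + w j)" and w: "w \<in> monomials_in Z"
    unfolding cone_def by auto
  from w obtain e :: "nat \<times> bool \<Rightarrow> nat" where e0: "\<forall>z. z \<notin> Z \<longrightarrow> e z = 0"
    and we: "\<forall>j. w j = int (e (j, True)) - int (e (j, False))"
    unfolding monomials_in_def by auto
  show "\<forall>j. ((j,True)\<in>Z \<longrightarrow> u j \<le> b j) \<and> ((j,False)\<in>Z \<longrightarrow> b j \<le> u j)
            \<and> ((j,True)\<notin>Z \<and> (j,False)\<notin>Z \<longrightarrow> b j = u j)"
  proof
    fix j
    show "((j,True)\<in>Z \<longrightarrow> u j \<le> b j) \<and> ((j,False)\<in>Z \<longrightarrow> b j \<le> u j)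
            \<and> ((j,True)\<notin>Z \<and> (j,False)\<notin>Z \<longrightarrow> b j = u j)"
      using nb e0 we b by (metis add_le_same_cancel1 diff_ge_0_iff_ge diff_le_0_iff_le
          diff_zero of_nat_0 of_nat_0_le_iff add.right_neutral minus_nat.diff_0 le_add_same_cancel1
          diff_self_eq_0 minus_int_code(1))
  qed
next
  assume H: "\<forall>j. ((j,True)\<in>Z \<longrightarrow> u j \<le> b j) \<and> ((j,False)\<in>Z \<longrightarrow> b j \<le> u j)
            \<and> ((j,True)\<notin>Z \<and> (j,False)\<notin>Z \<longrightarrow> b j = u j)"
  define e :: "nat \<times> bool \<Rightarrow> nat" where
    "e = (\<lambda>(j, t). if (j, t) \<in> Z then (if t then nat (b j - u j) else nat (u j - b j)) else 0)"
  have "(\<lambda>j. b j - u j) \<in> monomials_in Z"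
    unfolding monomials_in_def
  proof (intro CollectI exI[of _ e] conjI allI impI)
    fix z assume "z \<notin> Z" then show "e z = 0" unfolding e_def by (cases z) auto
  next
    fix j show "b j - u j = int (e (j, True)) - int (e (j, False))"
      using H[rule_format, of j] nb unfolding e_def by auto
  qed
  moreover have "b = (\<lambda>j. u j + (\<lambda>j. b j - u j) j)" by auto
  ultimately show "b \<in> cone u Z" unfolding cone_def
    using image_eqI[of b "\<lambda>w j. u j + w j" "\<lambda>j. b j - u j" "monomials_in Z"] by simp
qed

lemma keys_sum_list: "Poly_Mapping.keys (sum_list ps) \<subseteq> (\<Union>q\<in>set ps. Poly_Mapping.keys q)"
proof (induction ps)
  case Nil then show ?case by simp
next
  case (Cons q ps) then show ?case using keys_add[of q "sum_list ps"] by auto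
qed

lemma ex1_uniq: "\<exists>!x. P x \<Longrightarrow> P a \<Longrightarrow> P b \<Longrightarrow> a = b" by blast

lemma decD1: assumes "stanley_decomposition TYPE('k::field) n A D"
  shows "\<forall>i < length D. is_stanley_space n A (D ! i)"
  using assms unfolding stanley_decomposition_def by (elim conjE) assumption

lemma decD2: assumes "stanley_decomposition TYPE('k::field) n A D"
  shows "\<forall>i < length D. (stanley_space (fst (D ! i)) (snd (D ! i)) :: ((nat \<Rightarrow> int) \<Rightarrow>\<^sub>0 'k) set) \<subseteq> Sf n A"
  using assms unfolding stanley_decomposition_def by (elim conjE) assumption

lemma decD3: assumes "stanley_decomposition TYPE('k::field) n A D"
  shows "\<forall>p \<in> (Sf n A :: ((nat \<Rightarrow> int) \<Rightarrow>\<^sub>0 'k) set).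
        \<exists>!ps. length ps = length D \<and>
              (\<forall>i < length D. ps ! i \<in> stanley_space (fst (D ! i)) (snd (D ! i))) \<and>
              p = sum_list ps"
  using assms unfolding stanley_decomposition_def by (elim conjE) assumption

lemma cover:
  assumes dec: "stanley_decomposition TYPE('k::field) n A D" and a: "a \<in> monomials_Sf n A"
  shows "\<exists>i<length D. a \<in> cone (fst (D!i)) (snd (D!i))"
proof -
  let ?p = "Poly_Mapping.single a (1::'k)"
  have "?p \<in> Sf n A" using a unfolding Sf_def by simp
  then have "\<exists>!ps. length ps = length D \<and>
              (\<forall>i < length D. ps ! i \<in> stanley_space (fst (D ! i)) (snd (D ! i))) \<and>
              ?p = sum_list ps" using decD3[OF dec] by (rule bspec[rotated])
  then obtain ps where len: "length ps = length D"
    and ps: "\<forall>i < length D. ps ! i \<in> (stanley_space (fst (D ! i)) (snd (D ! i)) :: ((nat \<Rightarrow> int) \<Rightarrow>\<^sub>0 'k) set)"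
    and sum: "?p = sum_list ps"
    by (metis (no_types, lifting) ex1_implies_ex)
  have "a \<in> Poly_Mapping.keys (sum_list ps)" using sum[symmetric] by simp
  then have "a \<in> (\<Union>q\<in>set ps. Poly_Mapping.keys q)" using keys_sum_list by (rule subsetD[rotated])
  then obtain q where q: "q \<in> set ps" "a \<in> Poly_Mapping.keys q" by (rule UN_E)
  from q(1) obtain i where i: "i < length ps" "ps ! i = q" by (auto simp: in_set_conv_nth)
  have "q \<in> (stanley_space (fst (D ! i)) (snd (D ! i)) :: ((nat \<Rightarrow> int) \<Rightarrow>\<^sub>0 'k) set)"
    using ps i len by auto
  then have "a \<in> cone (fst (D!i)) (snd (D!i))" using q(2) unfolding stanley_space_def cone_def by blast
  then show ?thesis using i len by auto
qed

lemma sum_list_rep0: "sum_list (replicate m (0::'a::monoid_add)) = 0"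
  by (induction m) auto

lemma single_nz: "Poly_Mapping.single a (1::'k::field) \<noteq> 0"
proof
  assume "Poly_Mapping.single a (1::'k) = 0"
  then have "Poly_Mapping.keys (Poly_Mapping.single a (1::'k)) = Poly_Mapping.keys 0" by simp
  then show False by simp
qed

lemma sum_list_single_upd:
  "sum_list ((replicate m (0::'a::monoid_add))[i := p]) = (if i < m then p else 0)"
proof (induction m arbitrary: i)
  case 0 then show ?case by simp
next
  case (Suc m) then show ?case by (cases i) (auto simp: sum_list_rep0)
qed

lemma disjoint:
  assumes dec: "stanley_decomposition TYPE('k::field) n A D" and ik: "i < length D" "k < length D"
    and a: "a \<in> cone (fst (D!i)) (snd (D!i))" "a \<in> cone (fst (D!k)) (snd (D!k))"
  shows "i = k"
proof (rule ccontr)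
  assume ne: "i \<noteq> k"
  let ?p = "Poly_Mapping.single a (1::'k)"
  let ?z = "replicate (length D) (0 :: (nat \<Rightarrow> int) \<Rightarrow>\<^sub>0 'k)"
  let ?S = "\<lambda>m. (stanley_space (fst (D ! m)) (snd (D ! m)) :: ((nat \<Rightarrow> int) \<Rightarrow>\<^sub>0 'k) set)"
  have pi: "?p \<in> ?S i" using a unfolding stanley_space_def cone_def by simp
  have pk: "?p \<in> ?S k" using a unfolding stanley_space_def cone_def by simp
  have z: "\<And>m. (0 :: (nat \<Rightarrow> int) \<Rightarrow>\<^sub>0 'k) \<in> ?S m" unfolding stanley_space_def by simp
  have "?p \<in> Sf n A" using decD2[OF dec] pi ik(1) by blast
  then have ex1: "\<exists>!ps. length ps = length D \<and> (\<forall>m < length D. ps ! m \<in> ?S m) \<and> ?p = sum_list ps"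
    using decD3[OF dec] by (rule bspec[rotated])
  have c1: "length (?z[i:=?p]) = length D \<and> (\<forall>m < length D. ?z[i:=?p] ! m \<in> ?S m) \<and> ?p = sum_list (?z[i:=?p])"
    using pi z ik by (auto simp: nth_list_update sum_list_single_upd)
  have c2: "length (?z[k:=?p]) = length D \<and> (\<forall>m < length D. ?z[k:=?p] ! m \<in> ?S m) \<and> ?p = sum_list (?z[k:=?p])"
    using pk z ik by (auto simp: nth_list_update sum_list_single_upd)
  have "?z[i:=?p] = ?z[k:=?p]" using ex1_uniq[OF ex1 c1 c2] .
  then have "?z[i:=?p] ! i = ?z[k:=?p] ! i" by simp
  then have "?p = 0" using ne ik by simp
  then have "Poly_Mapping.keys ?p = {}" by simp
  then show False by simp
qed

lemma valid_inj:
  assumes "valid_Z n A Z" shows "inj_on fst Z"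
proof (rule inj_onI)
  fix x y assume xy: "x \<in> Z" "y \<in> Z" "fst x = fst y"
  obtain j t where x: "x = (j, t)" by (cases x)
  obtain j' t' where y: "y = (j', t')" by (cases y)
  have "j = j'" using xy x y by simp
  moreover have "t = t'"
  proof (rule ccontr)
    assume "t \<noteq> t'"
    then have "(j, True) \<in> Z \<and> (j, False) \<in> Z" using xy x y \<open>j = j'\<close> by (cases t) auto
    then show False using assms unfolding valid_Z_def by blast
  qed
  ultimately show "x = y" using x y by simp
qed

lemma valid_fst: assumes "valid_Z n A Z" "A \<subseteq> {1..n}" shows "fst ` Z \<subseteq> {1..n}"
proof
  fix x assume "x \<in> fst ` Z"
  then obtain z where z: "z \<in> Z" "x = fst z" by blast
  then have "z \<in> {(j, True) | j. j \<in> {1..n}} \<union> {(j, False) | j. j \<in> A}"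
    using assms(1) unfolding valid_Z_def by blast
  then show "x \<in> {1..n}" using z assms(2) by auto
qed

lemma valid_card:
  assumes "valid_Z n A Z" "A \<subseteq> {1..n}" shows "card Z = card (fst ` Z)" "card Z \<le> n" "finite Z"
proof -
  show c: "card Z = card (fst ` Z)" using card_image[OF valid_inj[OF assms(1)]] by simp
  show "card Z \<le> n" using c card_mono[OF _ valid_fst[OF assms(1,2)]] by simp
  show "finite Z" using finite_imageD[OF finite_subset[OF valid_fst[OF assms(1,2)]] valid_inj[OF assms(1)]] by simp
qed

lemma valid_full:
  assumes "valid_Z n A Z" "card Z = n" "j \<in> {1..n}" "A \<subseteq> {1..n}"
  shows "(j, True) \<in> Z \<or> (j, False) \<in> Z"
proof -
  have "fst ` Z = {1..n}"
    using card_seteq[OF _ valid_fst[OF assms(1,4)]] valid_card[OF assms(1,4)] assms(2) by simp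
  then obtain z where "z \<in> Z" "fst z = j" using assms(3) by force
  then show ?thesis by (cases z) (metis (full_types) fst_conv)
qed

lemma valid_sub: "valid_Z n A Z \<Longrightarrow> (j, False) \<in> Z \<Longrightarrow> j \<in> A"
  unfolding valid_Z_def by auto

lemma valid_nb: "valid_Z n A Z \<Longrightarrow> \<forall>j. \<not> ((j, True) \<in> Z \<and> (j, False) \<in> Z)"
  unfolding valid_Z_def by auto

lemma full_index:
  assumes dec: "stanley_decomposition TYPE('k::field) n A D" and An: "A \<subseteq> {1..n}"
    and Z: "valid_Z n A Z" "card Z = n"
  shows "\<exists>i<length D. snd (D!i) = Z"
proof -
  define M :: int where "M = 1 + (\<Sum>i<length D. \<Sum>j\<in>{1..n}. \<bar>fst (D!i) j\<bar>)"
  have Mb: "\<bar>fst (D!i) j\<bar> < M" if "i < length D" "j \<in> {1..n}" for i j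
  proof -
    have "\<bar>fst (D!i) j\<bar> \<le> (\<Sum>j\<in>{1..n}. \<bar>fst (D!i) j\<bar>)"
      by (rule member_le_sum) (use that in auto)
    also have "\<dots> \<le> (\<Sum>i<length D. \<Sum>j\<in>{1..n}. \<bar>fst (D!i) j\<bar>)"
      by (rule member_le_sum[where f="\<lambda>i. \<Sum>j\<in>{1..n}. \<bar>fst (D!i) j\<bar>"])
        (use that in \<open>auto intro: sum_nonneg\<close>)
    finally show ?thesis unfolding M_def by simp
  qed
  have M0: "M > 0" unfolding M_def by (auto intro!: sum_nonneg add_pos_nonneg)
  define b where "b = (\<lambda>j. if j \<in> {1..n} then (if (j, False) \<in> Z then -M else M) else 0)"
  have "b \<in> monomials_Sf n A"
    unfolding monomials_Sf_def b_def using M0 valid_sub[OF Z(1)] by auto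
  then obtain i where i: "i < length D" and bi: "b \<in> cone (fst (D!i)) (snd (D!i))"
    using cover[OF dec] by blast
  have vi: "valid_Z n A (snd (D!i))" using decD1[OF dec] i unfolding is_stanley_space_def by blast
  note cc = bi[unfolded cone_char[OF valid_nb[OF vi]]]
  have "Z \<subseteq> snd (D!i)"
  proof
    fix z assume z: "z \<in> Z"
    obtain j t where zj: "z = (j, t)" by (cases z)
    have jn: "j \<in> {1..n}" using valid_fst[OF Z(1) An] z zj by force
    have Mj: "\<bar>fst (D!i) j\<bar> < M" using Mb[OF i jn] .
    show "z \<in> snd (D!i)"
    proof (cases t)
      case True
      then have "(j, False) \<notin> Z" using valid_nb[OF Z(1)] z zj by auto
      then have "b j = M" using jn unfolding b_def by simp
      then show ?thesis using cc[rule_format, of j] Mj True zj by auto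
    next
      case False
      then have "b j = -M" using jn z zj unfolding b_def by simp
      then show ?thesis using cc[rule_format, of j] Mj False zj by auto
    qed
  qed
  then have "Z = snd (D!i)"
    using card_seteq[OF valid_card(3)[OF vi An]] valid_card(2)[OF vi An] Z(2) by simp
  then show ?thesis using i by auto
qed

lemma full_unique:
  assumes dec: "stanley_decomposition TYPE('k::field) n A D"
    and ik: "i < length D" "k < length D" and Zi: "snd (D!i) = Z" and Zk: "snd (D!k) = Z"
    and cZ: "card Z = n" and An: "A \<subseteq> {1..n}"
  shows "i = k"
proof -
  define u where "u = fst (D!i)"
  define v where "v = fst (D!k)"
  have si: "is_stanley_space n A (D!i)" and sk: "is_stanley_space n A (D!k)"
    using decD1[OF dec] ik by auto
  have vZ: "valid_Z n A Z" using si Zi unfolding is_stanley_space_def by simp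
  have u: "u \<in> monomials_Sf n A" using si unfolding is_stanley_space_def u_def by simp
  have v: "v \<in> monomials_Sf n A" using sk unfolding is_stanley_space_def v_def by simp
  define b where "b = (\<lambda>j. if (j, True) \<in> Z then max (u j) (v j)
      else if (j, False) \<in> Z then min (u j) (v j) else u j)"
  have uv: "u j = v j" if "(j, True) \<notin> Z" "(j, False) \<notin> Z" for j
  proof -
    have "j \<notin> {1..n}" using valid_full[OF vZ cZ _ An] that by blast
    then show ?thesis using u v unfolding monomials_Sf_def by auto
  qed
  have "b \<in> cone u Z" unfolding cone_char[OF valid_nb[OF vZ]] b_def using valid_nb[OF vZ] by auto
  moreover have "b \<in> cone v Z" unfolding cone_char[OF valid_nb[OF vZ]] b_def using valid_nb[OF vZ] uv by auto
  ultimately show ?thesis using disjoint[OF dec ik] Zi Zk u_def v_def by metis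
qed

theorem corollary6p6:
  fixes n :: nat and A :: "nat set"
    and D :: "((nat \<Rightarrow> int) \<times> (nat \<times> bool) set) list"
  assumes "A \<subseteq> {1..n}"
    and "stanley_decomposition TYPE('k::field) n A D"
  shows "card {i. i < length D \<and>
            stanley_dim (D ! i) = Max {stanley_dim (D ! k) | k. k < length D}} = 2 ^ card A"
proof -
  note dec = assms(2)
  define F where "F = {Z. valid_Z n A Z \<and> card Z = n}"
  define I where "I = {i. i < length D \<and> card (snd (D!i)) = n}"
  define f where "f = (\<lambda>S. (\<lambda>j. (j, True)) ` ({1..n} - S) \<union> (\<lambda>j. (j, False)) ` S)"
  define g where "g = (\<lambda>Z::(nat \<times> bool) set. {j. (j, False) \<in> Z})"
  have finA: "finite A" using assms(1) finite_subset by blast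
  have fF: "f S \<in> F" if "S \<in> Pow A" for S
  proof -
    have v: "valid_Z n A (f S)" using that assms(1) unfolding valid_Z_def f_def by auto
    have "fst ` f S = ({1..n} - S) \<union> S" unfolding f_def by (simp add: image_Un image_image)
    also have "\<dots> = {1..n}" using that assms(1) by blast
    finally have "fst ` f S = {1..n}" .
    then have "card (f S) = n" using valid_card(1)[OF v assms(1)] by simp
    then show ?thesis using v unfolding F_def by simp
  qed
  have bF: "bij_betw f (Pow A) F"
  proof (rule bij_betw_byWitness[where f'=g])
    show "\<forall>S\<in>Pow A. g (f S) = S" unfolding f_def g_def by blast
    show "\<forall>Z\<in>F. f (g Z) = Z"
    proof
      fix Z assume "Z \<in> F"
      then have v: "valid_Z n A Z" and c: "card Z = n" unfolding F_def by auto
      show "f (g Z) = Z"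
      proof (rule set_eqI)
        fix z :: "nat \<times> bool"
        obtain j t where z: "z = (j, t)" by (cases z)
        have jT: "(j, True) \<in> Z \<longleftrightarrow> j \<in> {1..n} \<and> (j, False) \<notin> Z"
        proof
          assume "(j, True) \<in> Z"
          then show "j \<in> {1..n} \<and> (j, False) \<notin> Z"
            using valid_nb[OF v] valid_fst[OF v assms(1)] by force
        next
          assume "j \<in> {1..n} \<and> (j, False) \<notin> Z"
          then show "(j, True) \<in> Z" using valid_full[OF v c _ assms(1), of j] by blast
        qed
        have "(j, True) \<in> f (g Z) \<longleftrightarrow> j \<in> {1..n} \<and> (j, False) \<notin> Z"
          unfolding f_def g_def by blast
        moreover have "(j, False) \<in> f (g Z) \<longleftrightarrow> (j, False) \<in> Z"
          unfolding f_def g_def by blast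
        ultimately show "z \<in> f (g Z) \<longleftrightarrow> z \<in> Z" using jT z by (cases t) auto
      qed
    qed
    show "f ` Pow A \<subseteq> F" using fF by blast
    show "g ` F \<subseteq> Pow A" unfolding F_def g_def using valid_sub by blast
  qed
  have cF: "card F = 2 ^ card A" using bij_betw_same_card[OF bF] card_Pow[OF finA] by simp
  have bI: "bij_betw (\<lambda>i. snd (D!i)) I F"
  proof (rule bij_betw_imageI)
    show "inj_on (\<lambda>i. snd (D!i)) I"
      by (rule inj_onI) (use full_unique[OF dec _ _ _ _ _ assms(1)] in \<open>auto simp: I_def\<close>)
    show "(\<lambda>i. snd (D!i)) ` I = F"
    proof
      show "(\<lambda>i. snd (D!i)) ` I \<subseteq> F"
        using decD1[OF dec] unfolding I_def F_def is_stanley_space_def by auto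
      show "F \<subseteq> (\<lambda>i. snd (D!i)) ` I"
      proof
        fix Z assume "Z \<in> F"
        then have v: "valid_Z n A Z" and c: "card Z = n" unfolding F_def by auto
        obtain i where "i < length D" "snd (D!i) = Z" using full_index[OF dec assms(1) v c] by blast
        then show "Z \<in> (\<lambda>i. snd (D!i)) ` I" unfolding I_def using c by force
      qed
    qed
  qed
  have cI: "card I = 2 ^ card A" using bij_betw_same_card[OF bI] cF by simp
  define S where "S = {stanley_dim (D ! k) | k. k < length D}"
  have finS: "finite S" unfolding S_def by simp
  have le: "\<forall>y\<in>S. y \<le> n"
    using decD1[OF dec] valid_card(2)[OF _ assms(1)] unfolding S_def stanley_dim_def is_stanley_space_def by auto
  have "f {} \<in> F" using fF by simp
  then obtain i where "i \<in> I" using bI unfolding bij_betw_def by force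
  then have "n \<in> S" unfolding S_def I_def stanley_dim_def by auto
  then have MS: "Max S = n" using Max_eqI[OF finS] le by auto
  have "{i. i < length D \<and> stanley_dim (D ! i) = Max S} = I"
    unfolding MS I_def stanley_dim_def by simp
  then show ?thesis using cI unfolding S_def by simp
qed

end
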